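(* For every odd $q\geq 3$, the generalized Farey map $F_q\colon[0,1]\to[0,1]$ is topologically mixing: for all nonempty open sets $B_1,B_2\subseteq[0,1]$ there is $N\in\mathbb{N}$ such that $F_q^{n}(B_1)\cap B_2\neq\emptyset$ for all $n\geq N$.
   Context: Let $q\geq 3$ be odd and $\lambda=2\cos(\pi/q)$. Elements of $\mathrm{PGL}_2(\mathbb{R})$ act on $\mathbb{R}\cup\{\infty\}$ by $\begin{bmatrix}a&b\\c&d\end{bmatrix}.x=(ax+b)/(cx+d)$. Put $s(x)=\sin(x\pi/q)/\sin(\pi/q)$, $g_k=\begin{bmatrix}s(k)&-s(k+1)\\-s(k-1)&s(k)\end{bmatrix}$, $Q=\begin{bmatrix}0&1\\1&0\end{bmatrix}$, $K=\{(q+1)/2,\dots,q-1\}$. The generalized Farey map $F_q\colon[0,1]\to[0,1]$ is defined, for $k\in K$, by $F_q(x)=g_k.x$ for $x\in[g_k^{-1}.0,g_k^{-1}.1]$ and $F_q(x)=Qg_k.x$ for $x\in[(Qg_k)^{-1}.1,(Qg_k)^{-1}.0]$ (these intervals cover $[0,1]$, overlap only at endpoints, and the definitions agree there). *)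

theory Defs
  imports "HOL-Analysis.Analysis"
begin

text \<open>Elements of PGL_2(R) represented by real 2x2 matrices (a,b,c,d) = [a b; c d].\<close>
type_synonym mat2 = "real \<times> real \<times> real \<times> real"

definition mact :: "mat2 \<Rightarrow> real \<Rightarrow> real" where
  "mact M x = (case M of (a,b,c,d) \<Rightarrow> (a * x + b) / (c * x + d))"

definition mmul :: "mat2 \<Rightarrow> mat2 \<Rightarrow> mat2" where
  "mmul M N = (case M of (a,b,c,d) \<Rightarrow> case N of (e,f,g,h) \<Rightarrow>
     (a*e + b*g, a*f + b*h, c*e + d*g, c*f + d*h))"

text \<open>Inverse in PGL_2: the adjugate (a scalar multiple of the inverse matrix).\<close>
definition minv :: "mat2 \<Rightarrow> mat2" where
  "minv M = (case M of (a,b,c,d) \<Rightarrow> (d, -b, -c, a))"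

definition sq :: "nat \<Rightarrow> real \<Rightarrow> real" where
  "sq q x = sin (x * pi / real q) / sin (pi / real q)"

definition gk :: "nat \<Rightarrow> nat \<Rightarrow> mat2" where
  "gk q k = (sq q (real k), - sq q (real k + 1), - sq q (real k - 1), sq q (real k))"

definition Qm :: mat2 where "Qm = (0, 1, 1, 0)"

definition Kset :: "nat \<Rightarrow> nat set" where
  "Kset q = {(q + 1) div 2 .. q - 1}"

text \<open>The generalized Farey map on [0,1]. On overlapping endpoints the branches agree
  (as stated in the paper); we pick any applicable branch.\<close>
definition farey :: "nat \<Rightarrow> real \<Rightarrow> real" where
  "farey q x = (SOME y. \<exists>k\<in>Kset q.
      (x \<in> {mact (minv (gk q k)) 0 .. mact (minv (gk q k)) 1} \<and> y = mact (gk q k) x) \<or>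
      (x \<in> {mact (minv (mmul Qm (gk q k))) 1 .. mact (minv (mmul Qm (gk q k))) 0}
         \<and> y = mact (mmul Qm (gk q k)) x))"

end

theory Submission
  imports Defs
begin


locale fl =
  fixes F :: "real \<Rightarrow> real" and Br :: "'b set" and al be :: "'b \<Rightarrow> real"
    and den :: "'b \<Rightarrow> real \<Rightarrow> real" and sg :: "'b \<Rightarrow> real"
  assumes br: "b \<in> Br \<Longrightarrow> 0 \<le> al b \<and> al b < be b \<and> be b \<le> 1"
  and cover: "0 \<le> x \<Longrightarrow> x \<le> 1 \<Longrightarrow> \<exists>b\<in>Br. al b \<le> x \<and> x \<le> be b"
  and cont: "b \<in> Br \<Longrightarrow> continuous_on {al b..be b} F"
  and dpos: "b \<in> Br \<Longrightarrow> al b \<le> x \<Longrightarrow> x \<le> be b \<Longrightarrow> 0 < den b x \<and> den b x \<le> 1"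
  and diff: "b \<in> Br \<Longrightarrow> al b \<le> x \<Longrightarrow> x \<le> be b \<Longrightarrow> al b \<le> y \<Longrightarrow> y \<le> be b \<Longrightarrow>
     F x - F y = sg b * (x - y) / (den b x * den b y)"
  and sg: "b \<in> Br \<Longrightarrow> sg b = 1 \<or> sg b = -1"
  and ends: "b \<in> Br \<Longrightarrow> (F (al b) = 0 \<and> F (be b) = 1) \<or> (F (al b) = 1 \<and> F (be b) = 0)"
  and theta: "0 < \<delta> \<Longrightarrow> \<delta> < 1/2 \<Longrightarrow> \<exists>\<theta>. 0 < \<theta> \<and> \<theta> < 1 \<and>
     (\<forall>b\<in>Br. \<forall>x. al b \<le> x \<and> x \<le> be b \<and> \<delta> \<le> x \<and> x \<le> 1 - \<delta> \<longrightarrow> den b x \<le> \<theta>)"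
  and zero: "\<exists>b0\<in>Br. al b0 = 0 \<and> F 0 = 0 \<and> (\<forall>x. 0 \<le> x \<and> x \<le> be b0 \<longrightarrow> x + x^2 \<le> F x)"
  and one: "\<exists>b1\<in>Br. be b1 = 1 \<and> F 1 = 0"
begin

lemma mono_dir:
  assumes b: "b \<in> Br" and "al b \<le> x" "x \<le> y" "y \<le> be b"
  shows "0 \<le> sg b * (F y - F x)"
proof -
  have d: "0 < den b x" "0 < den b y" using dpos[OF b] assms by auto
  have "F y - F x = sg b * (y - x) / (den b y * den b x)" using diff[OF b] assms by auto
  hence "sg b * (F y - F x) = (sg b * sg b) * (y - x) / (den b y * den b x)" by simp
  also have "sg b * sg b = 1" using sg[OF b] by auto
  finally show ?thesis using d assms by simp
qed

lemma img_sub: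
  assumes b: "b \<in> Br" and "al b \<le> x" "x \<le> be b"
  shows "0 \<le> F x \<and> F x \<le> 1"
proof -
  have m1: "0 \<le> sg b * (F x - F (al b))" using mono_dir[OF b] assms br[OF b] by auto
  have m2: "0 \<le> sg b * (F (be b) - F x)" using mono_dir[OF b] assms br[OF b] by auto
  have m3: "0 \<le> sg b * (F (be b) - F (al b))" using mono_dir[OF b] assms br[OF b] by auto
  show ?thesis using ends[OF b] sg[OF b] m1 m2 m3 by auto
qed

lemma seg:
  assumes b: "b \<in> Br" and "al b \<le> x" "x \<le> y" "y \<le> be b"
  shows "{min (F x) (F y)..max (F x) (F y)} \<subseteq> F ` {x..y}"
proof -
  have "continuous_on {x..y} F" using cont[OF b] by (rule continuous_on_subset) (use assms in auto)
  hence c: "connected (F ` {x..y})" by (intro connected_continuous_image) auto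
  have "F x \<in> F ` {x..y}" "F y \<in> F ` {x..y}" using assms by auto
  thus ?thesis using connected_contains_Icc[OF c] by (cases "F x \<le> F y") auto
qed

lemma img_full:
  assumes b: "b \<in> Br" shows "{0..1} \<subseteq> F ` {al b..be b}"
  using seg[OF b, of "al b" "be b"] br[OF b] ends[OF b] by auto

lemma inj_br:
  assumes b: "b \<in> Br" and "al b \<le> x" "x \<le> be b" "al b \<le> y" "y \<le> be b" "x \<noteq> y"
  shows "F x \<noteq> F y"
proof -
  have d: "0 < den b x" "0 < den b y" using dpos[OF b] assms by auto
  have "F x - F y = sg b * (x - y) / (den b x * den b y)" using diff[OF b] assms by auto
  moreover have "sg b * (x - y) / (den b x * den b y) \<noteq> 0" using d sg[OF b] assms by auto
  ultimately show ?thesis by auto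
qed

lemma full01: "{0..1} \<subseteq> F ` {0..1}"
proof -
  obtain b0 where b0: "b0 \<in> Br" using zero by auto
  have "{al b0..be b0} \<subseteq> {0..1}" using br[OF b0] by auto
  thus ?thesis using img_full[OF b0] by blast
qed

lemma img_Suc: "(F ^^ Suc n) ` A = F ` ((F ^^ n) ` A)"
  by (simp add: image_image)

lemma T_mono:
  assumes "{0..1} \<subseteq> (F ^^ n) ` A" "n \<le> m"
  shows "{0..1} \<subseteq> (F ^^ m) ` A"
proof -
  have "{0..1} \<subseteq> (F ^^ (n + k)) ` A" for k
  proof (induction k)
    case 0 then show ?case using assms by simp
  next
    case (Suc k)
    have "{0..1} \<subseteq> F ` {0..1}" by (rule full01)
    also have "\<dots> \<subseteq> F ` ((F ^^ (n + k)) ` A)" using Suc by (intro image_mono)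
    finally show ?case by (metis add_Suc_right img_Suc)
  qed
  from this[of "m - n"] show ?thesis using assms by simp
qed

lemma step_img: "X \<subseteq> (F ^^ n) ` A \<Longrightarrow> F ` X \<subseteq> (F ^^ Suc n) ` A"
  unfolding img_Suc by (rule image_mono)

lemma anchor0:
  assumes z: "0 < z" and h: "{0..z} \<subseteq> (F ^^ n) ` A"
  shows "\<exists>m. {0..1} \<subseteq> (F ^^ m) ` A"
proof (rule ccontr)
  assume H: "\<not> ?thesis"
  obtain b0 where b0: "b0 \<in> Br" "al b0 = 0" "F 0 = 0" and g: "\<And>x. 0 \<le> x \<Longrightarrow> x \<le> be b0 \<Longrightarrow> x + x^2 \<le> F x"
    using zero by auto
  have claim: "\<exists>e. z + real j * z^2 \<le> e \<and> e \<le> 1 \<and> {0..e} \<subseteq> (F ^^ (n + j)) ` A" for j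
  proof (induction j)
    case 0
    show ?case
    proof (cases "z \<le> 1")
      case True then show ?thesis using h by (intro exI[of _ z]) auto
    next
      case False
      hence "{0..1} \<subseteq> (F ^^ n) ` A" using h by auto
      then show ?thesis using H by blast
    qed
  next
    case (Suc j)
    then obtain e where e: "z + real j * z^2 \<le> e" "e \<le> 1" "{0..e} \<subseteq> (F ^^ (n + j)) ` A" by auto
    have ez: "z \<le> e" using e(1) z by (smt (verit) mult_nonneg_nonneg of_nat_0_le_iff zero_le_power2)
    show ?case
    proof (cases "be b0 < e")
      case True
      hence "{al b0..be b0} \<subseteq> {0..e}" using b0 by auto
      hence "F ` {al b0..be b0} \<subseteq> (F ^^ Suc (n + j)) ` A" using e(3) step_img by (meson image_mono order_trans)
      hence "{0..1} \<subseteq> (F ^^ Suc (n + j)) ` A" using img_full[OF b0(1)] by blast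
      then show ?thesis using H by blast
    next
      case False
      have ge: "e + e^2 \<le> F e" using g[of e] False ez z by auto
      have s: "{min (F 0) (F e)..max (F 0) (F e)} \<subseteq> F ` {0..e}"
        using seg[OF b0(1), of 0 e] b0 False ez z by auto
      have "0 \<le> F e" using ge ez z by (smt (verit) zero_le_power2)
      hence "{0..F e} \<subseteq> F ` {0..e}" using s b0 by auto
      hence "{0..F e} \<subseteq> (F ^^ Suc (n + j)) ` A" using e(3) step_img by (meson image_mono order_trans)
      moreover have "F e \<le> 1" using img_sub[OF b0(1), of e] b0 False ez z by auto
      moreover have "z + real (Suc j) * z^2 \<le> F e"
      proof -
        have "z^2 \<le> e^2" using ez z by (intro power_mono) auto
        thus ?thesis using ge e(1) by (simp add: algebra_simps)
      qed
      ultimately show ?thesis by (intro exI[of _ "F e"]) simp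
    qed
  qed
  obtain j where j: "1 < real j * z^2" using ex_less_of_nat_mult[of "z^2" 1] z by auto
  obtain e where "z + real j * z^2 \<le> e" "e \<le> 1" using claim[of j] by auto
  thus False using j z by linarith
qed

lemma anchor1:
  assumes z: "0 \<le> z" "z < 1" and h: "{z..1} \<subseteq> (F ^^ n) ` A"
  shows "\<exists>m. {0..1} \<subseteq> (F ^^ m) ` A"
proof -
  obtain b1 where b1: "b1 \<in> Br" "be b1 = 1" "F 1 = 0" using one by auto
  show ?thesis
  proof (cases "z \<le> al b1")
    case True
    hence "{al b1..be b1} \<subseteq> {z..1}" using b1 by auto
    hence "F ` {al b1..be b1} \<subseteq> (F ^^ Suc n) ` A" using h step_img by (meson image_mono order_trans)
    thus ?thesis using img_full[OF b1(1)] by blast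
  next
    case False
    have s: "{min (F z) (F 1)..max (F z) (F 1)} \<subseteq> F ` {z..1}"
      using seg[OF b1(1), of z 1] b1 False z by auto
    have "0 \<le> F z" using img_sub[OF b1(1), of z] b1 False z by auto
    moreover have "F z \<noteq> F 1" using inj_br[OF b1(1), of z 1] b1 False z br[OF b1(1)] by auto
    ultimately have "0 < F z" using b1 by auto
    moreover have "{0..F z} \<subseteq> F ` {z..1}" using s b1 `0 \<le> F z` by auto
    moreover have "F ` {z..1} \<subseteq> (F ^^ Suc n) ` A" using h step_img by blast
    ultimately have "0 < F z" "{0..F z} \<subseteq> (F ^^ Suc n) ` A" by auto
    thus ?thesis by (rule anchor0)
  qed
qed

lemma anchorP:
  assumes b: "b \<in> Br" and xy: "al b \<le> x" "x < y" "y \<le> be b"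
    and e: "F x \<in> {0,1} \<or> F y \<in> {0,1}" and h: "{x..y} \<subseteq> (F ^^ n) ` A"
  shows "\<exists>m. {0..1} \<subseteq> (F ^^ m) ` A"
proof -
  have s: "{min (F x) (F y)..max (F x) (F y)} \<subseteq> (F ^^ Suc n) ` A"
    using seg[OF b, of x y] xy h step_img by (meson image_mono order_trans less_imp_le)
  have ne: "F x \<noteq> F y" using inj_br[OF b, of x y] xy by auto
  have r: "0 \<le> F x" "F x \<le> 1" "0 \<le> F y" "F y \<le> 1" using img_sub[OF b] xy by auto
  consider "F x = 0" | "F x = 1" | "F y = 0" | "F y = 1" using e by auto
  then show ?thesis
  proof cases
    case 1
    have h1: "{0..F y} \<subseteq> (F ^^ Suc n) ` A" using s r 1 by auto
    show ?thesis using anchor0[OF _ h1] 1 ne r by auto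
  next
    case 2
    have h1: "{F y..1} \<subseteq> (F ^^ Suc n) ` A" using s r 2 by auto
    show ?thesis using anchor1[OF _ _ h1] 2 ne r by auto
  next
    case 3
    have h1: "{0..F x} \<subseteq> (F ^^ Suc n) ` A" using s r 3 by auto
    show ?thesis using anchor0[OF _ h1] 3 ne r by auto
  next
    case 4
    have h1: "{F x..1} \<subseteq> (F ^^ Suc n) ` A" using s r 4 by auto
    show ?thesis using anchor1[OF _ _ h1] 4 ne r by auto
  qed
qed

lemma div_ge1: "0 \<le> (t::real) \<Longrightarrow> 0 < P \<Longrightarrow> P \<le> 1 \<Longrightarrow> t \<le> t / P"
  by (simp add: le_divide_eq mult_left_le)

lemma div_mono2: "0 \<le> (t::real) \<Longrightarrow> 0 < P \<Longrightarrow> P \<le> Q \<Longrightarrow> t / Q \<le> t / P"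
  by (simp add: divide_left_mono)

lemma growth:
  assumes b: "b \<in> Br" and xs: "al b \<le> x1" "x1 < x2" "x2 \<le> be b" "0 \<le> x1" "x2 \<le> 1"
    and l: "3 * \<delta> \<le> x2 - x1" and dl: "0 < \<delta>" and th: "0 < \<theta>" "\<theta> < 1"
    and tb: "\<forall>x. al b \<le> x \<and> x \<le> be b \<and> \<delta> \<le> x \<and> x \<le> 1 - \<delta> \<longrightarrow> den b x \<le> \<theta>"
  shows "(x2 - x1) + (1 / \<theta>^2 - 1) * \<delta> \<le> \<bar>F x2 - F x1\<bar>"
proof -
  define u where "u = max x1 \<delta>"
  define v where "v = min x2 (1 - \<delta>)"
  have uv: "x1 \<le> u" "u \<le> v" "v \<le> x2" "\<delta> \<le> v - u" "\<delta> \<le> u" "v \<le> 1 - \<delta>"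
    using xs l dl unfolding u_def v_def by auto
  have inb: "al b \<le> z \<Longrightarrow> z \<le> be b \<Longrightarrow> 0 < den b z \<and> den b z \<le> 1" for z using dpos[OF b] by auto
  define T1 where "T1 = (x2 - v) / (den b x2 * den b v)"
  define T2 where "T2 = (v - u) / (den b v * den b u)"
  define T3 where "T3 = (u - x1) / (den b u * den b x1)"
  have e1: "F x2 - F v = sg b * T1" unfolding T1_def using diff[OF b, of x2 v] uv xs by auto
  have e2: "F v - F u = sg b * T2" unfolding T2_def using diff[OF b, of v u] uv xs by auto
  have e3: "F u - F x1 = sg b * T3" unfolding T3_def using diff[OF b, of u x1] uv xs by auto
  have D: "0 < den b x2" "den b x2 \<le> 1" "0 < den b v" "den b v \<le> 1" "0 < den b u" "den b u \<le> 1"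
     "0 < den b x1" "den b x1 \<le> 1" using inb uv xs by auto
  have Dt: "den b v \<le> \<theta>" "den b u \<le> \<theta>" using tb uv xs by auto
  have t1: "x2 - v \<le> T1" unfolding T1_def using D uv
    by (intro div_ge1) (auto intro: mult_le_one)
  have t3: "u - x1 \<le> T3" unfolding T3_def using D uv
    by (intro div_ge1) (auto intro: mult_le_one)
  have pp: "den b v * den b u \<le> \<theta>^2" using D Dt th
    by (simp add: power2_eq_square mult_mono)
  have t2: "(v - u) / \<theta>^2 \<le> T2" unfolding T2_def using D uv pp
    by (intro div_mono2) auto
  have "F x2 - F x1 = sg b * (T1 + T2 + T3)" using e1 e2 e3 by (simp add: algebra_simps)
  hence "\<bar>F x2 - F x1\<bar> = T1 + T2 + T3"
    using sg[OF b] t1 t2 t3 uv th by (auto simp: abs_mult) (smt (verit) divide_nonneg_nonneg zero_le_power2)+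
  moreover have "(v - u) / \<theta>^2 = (v - u) + (1/\<theta>^2 - 1) * (v - u)" by (simp add: algebra_simps)
  moreover have "(1/\<theta>^2 - 1) * \<delta> \<le> (1/\<theta>^2 - 1) * (v - u)"
  proof -
    have "\<theta>^2 < 1" using th by (simp add: power_less_one_iff)
    hence "1 < 1/\<theta>^2" using th by (simp add: less_divide_eq)
    thus ?thesis using uv by (intro mult_left_mono) auto
  qed
  ultimately show ?thesis using t1 t2 t3 by linarith
qed

lemma main:
  assumes "0 \<le> a0" "a0 < b0" "b0 \<le> 1"
  shows "\<exists>m. {0..1} \<subseteq> (F ^^ m) ` {a0..b0}"
proof (rule ccontr)
  assume H: "\<not> ?thesis"
  define J where "J = {a0..b0}"
  define l0 where "l0 = b0 - a0"
  define \<delta> where "\<delta> = l0 / 3"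
  have dl: "0 < \<delta>" "\<delta> < 1/2" using assms unfolding \<delta>_def l0_def by auto
  obtain \<theta> where th: "0 < \<theta>" "\<theta> < 1" and
    tb: "\<forall>b\<in>Br. \<forall>x. al b \<le> x \<and> x \<le> be b \<and> \<delta> \<le> x \<and> x \<le> 1 - \<delta> \<longrightarrow> den b x \<le> \<theta>"
    using theta[OF dl] by auto
  define \<kappa> where "\<kappa> = 1 / \<theta>^2 - 1"
  have kp: "0 < \<kappa>"
  proof -
    have "\<theta>^2 < 1" using th by (simp add: power_less_one_iff)
    hence "1 < 1/\<theta>^2" using th by (simp add: less_divide_eq)
    thus ?thesis unfolding \<kappa>_def by simp
  qed
  have claim: "\<exists>a b. 0 \<le> a \<and> a < b \<and> b \<le> 1 \<and> {a..b} \<subseteq> (F ^^ n) ` J \<and> l0 + real n * \<kappa> * \<delta> \<le> b - a" for n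
  proof (induction n)
    case 0
    show ?case using assms unfolding J_def l0_def by (intro exI[of _ a0] exI[of _ b0]) auto
  next
    case (Suc n)
    then obtain a b where ab: "0 \<le> a" "a < b" "b \<le> 1" "{a..b} \<subseteq> (F ^^ n) ` J"
      "l0 + real n * \<kappa> * \<delta> \<le> b - a" by auto
    show ?case
    proof (cases "\<exists>c\<in>Br. (a < al c \<and> al c < b) \<or> (a < be c \<and> be c < b)")
      case True
      then obtain c where c: "c \<in> Br" "(a < al c \<and> al c < b) \<or> (a < be c \<and> be c < b)" by auto
      have ec: "F (al c) \<in> {0,1}" "F (be c) \<in> {0,1}" using ends[OF c(1)] by auto
      from c(2) have "\<exists>m. {0..1} \<subseteq> (F ^^ m) ` J"
      proof
        assume p: "a < al c \<and> al c < b"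
        define w where "w = min b (be c)"
        have "al c < w" "w \<le> be c" using p br[OF c(1)] unfolding w_def by auto
        moreover have "{al c..w} \<subseteq> (F ^^ n) ` J" using ab(4) p unfolding w_def by auto
        ultimately show ?thesis using anchorP[OF c(1), of "al c" w] ec by auto
      next
        assume p: "a < be c \<and> be c < b"
        define w where "w = max a (al c)"
        have "al c \<le> w" "w < be c" using p br[OF c(1)] unfolding w_def by auto
        moreover have "{w..be c} \<subseteq> (F ^^ n) ` J" using ab(4) p unfolding w_def by auto
        ultimately show ?thesis using anchorP[OF c(1), of w "be c"] ec by auto
      qed
      then show ?thesis using H unfolding J_def by auto
    next
      case False
      obtain c where c: "c \<in> Br" "al c \<le> (a+b)/2" "(a+b)/2 \<le> be c"
        using cover[of "(a+b)/2"] ab by auto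
      have nn: "\<not> (a < al c \<and> al c < b)" "\<not> (a < be c \<and> be c < b)" using False c(1) by auto
      have cab1: "al c \<le> a" using nn(1) c(2) ab(2) by argo
      have cab2: "b \<le> be c" using nn(2) c(3) ab(2) by argo
      note cab = cab1 cab2
      have nk: "0 \<le> real n * \<kappa> * \<delta>" using kp dl by auto
      have g: "(b - a) + \<kappa> * \<delta> \<le> \<bar>F b - F a\<bar>"
        unfolding \<kappa>_def
        using growth[OF c(1), of a b \<delta> \<theta>] cab ab th dl tb c(1) nk unfolding \<delta>_def by auto
      define a' where "a' = min (F a) (F b)"
      define b' where "b' = max (F a) (F b)"
      have s: "{a'..b'} \<subseteq> (F ^^ Suc n) ` J"
        using seg[OF c(1), of a b] cab ab step_img unfolding a'_def b'_def
        by (meson image_mono order_trans less_imp_le)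
      have r: "0 \<le> F a" "F a \<le> 1" "0 \<le> F b" "F b \<le> 1" using img_sub[OF c(1)] cab ab by auto
      have "b' - a' = \<bar>F b - F a\<bar>" unfolding a'_def b'_def by auto
      moreover have "l0 + real (Suc n) * \<kappa> * \<delta> = (l0 + real n * \<kappa> * \<delta>) + \<kappa> * \<delta>"
        by (simp add: algebra_simps)
      ultimately have "l0 + real (Suc n) * \<kappa> * \<delta> \<le> b' - a'" using g ab(5) by linarith
      moreover have "0 < l0" using assms unfolding l0_def by auto
      moreover have "0 \<le> real (Suc n) * \<kappa> * \<delta>" using kp dl by auto
      ultimately have lt: "a' < b'" by linarith
      have "0 \<le> a'" "b' \<le> 1" using r unfolding a'_def b'_def by auto
      then show ?thesis using s lt \<open>l0 + real (Suc n) * \<kappa> * \<delta> \<le> b' - a'\<close>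
        by blast
    qed
  qed
  obtain n where n: "1 < real n * (\<kappa> * \<delta>)" using ex_less_of_nat_mult[of "\<kappa> * \<delta>" 1] kp dl by auto
  obtain a b where "0 \<le> a" "b \<le> 1" "l0 + real n * \<kappa> * \<delta> \<le> b - a" using claim[of n] by auto
  moreover have "0 < l0" using assms unfolding l0_def by auto
  ultimately show False using n by (simp add: mult.assoc)
qed

lemma mixing:
  assumes "openin (top_of_set {0..1::real}) B1" "B1 \<noteq> {}"
    "openin (top_of_set {0..1::real}) B2" "B2 \<noteq> {}"
  shows "\<exists>N::nat. \<forall>n\<ge>N. (F ^^ n) ` B1 \<inter> B2 \<noteq> {}"
proof -
  obtain x where x: "x \<in> B1" using assms by auto
  have sub: "B1 \<subseteq> {0..1}" and "\<forall>x\<in>B1. \<exists>e>0. cball x e \<inter> {0..1} \<subseteq> B1"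
    using assms(1) unfolding openin_contains_cball by auto
  then obtain e where e: "e > 0" "cball x e \<inter> {0..1} \<subseteq> B1" using x by auto
  define a where "a = max 0 (x - e)"
  define b where "b = min 1 (x + e)"
  have x01: "0 \<le> x" "x \<le> 1" using x sub by auto
  have ab: "0 \<le> a" "a < b" "b \<le> 1" using e x01 unfolding a_def b_def by auto
  have "{a..b} \<subseteq> cball x e \<inter> {0..1}" unfolding a_def b_def by (auto simp: dist_real_def)
  hence abB: "{a..b} \<subseteq> B1" using e by auto
  obtain m where m: "{0..1} \<subseteq> (F ^^ m) ` {a..b}" using main[OF ab] by auto
  have B2: "B2 \<subseteq> {0..1}" using openin_imp_subset[OF assms(3)] . 
  show ?thesis
  proof (intro exI allI impI)
    fix n assume "m \<le> n"
    hence "{0..1} \<subseteq> (F ^^ n) ` {a..b}" using T_mono[OF m] by auto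
    also have "\<dots> \<subseteq> (F ^^ n) ` B1" using abB by (intro image_mono)
    finally show "(F ^^ n) ` B1 \<inter> B2 \<noteq> {}" using B2 assms(4) by blast
  qed
qed

end



lemma sin_prod: "sin ((a::real)+b) * sin (a-b) = sin a ^2 - sin b ^2"
proof -
  have "sin (a+b) * sin (a-b) = (sin a * cos b + cos a * sin b) * (sin a * cos b - cos a * sin b)"
    by (simp add: sin_add sin_diff)
  also have "\<dots> = (sin a * cos b)^2 - (cos a * sin b)^2"
    by (simp add: power2_eq_square algebra_simps)
  also have "\<dots> = sin a ^2 - sin b ^2"
    by (simp add: power_mult_distrib cos_squared_eq algebra_simps)
  finally show ?thesis .
qed

lemma sin_ge:
  assumes "0 < a" "a \<le> pi/2" "a \<le> t" "t \<le> pi - a"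
  shows "sin a \<le> sin t"
proof (cases "t \<le> pi/2")
  case True thus ?thesis using assms by (intro sin_monotone_2pi_le) auto
next
  case False
  have "sin t = sin (pi - t)" by simp
  moreover have "sin a \<le> sin (pi - t)" using assms False by (intro sin_monotone_2pi_le) auto
  ultimately show ?thesis by simp
qed

context fixes q :: nat assumes q3: "3 \<le> q"
begin

lemma sinq_pos: "0 < sin (pi / real q)"
  using q3 by (intro sin_gt_zero) (auto simp: divide_less_eq)

lemma sq_ident: "sq q x ^2 - sq q (x+1) * sq q (x-1) = 1"
proof -
  define t where "t = pi / real q"
  define A where "A = x * pi / real q"
  have e1: "(x+1) * pi / real q = A + t" unfolding A_def t_def by (simp add: algebra_simps add_divide_distrib)
  have e2: "(x-1) * pi / real q = A - t" unfolding A_def t_def by (simp add: algebra_simps diff_divide_distrib)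
  have st: "sin t \<noteq> 0" using sinq_pos unfolding t_def by auto
  have "sq q x ^2 - sq q (x+1) * sq q (x-1) = sin A ^2 / sin t ^2 - sin (A+t) * sin (A-t) / sin t ^2"
    unfolding sq_def e1 e2 A_def[symmetric] t_def[symmetric]
    by (simp add: power_divide power2_eq_square)
  also have "\<dots> = (sin A ^2 - sin (A+t) * sin (A-t)) / sin t ^2"
    by (simp add: diff_divide_distrib)
  also have "\<dots> = 1" using st by (simp add: sin_prod)
  finally show ?thesis .
qed

lemma sq_pos: "0 < x \<Longrightarrow> x < real q \<Longrightarrow> 0 < sq q x"
  unfolding sq_def using sinq_pos q3
  by (intro divide_pos_pos sin_gt_zero) (auto simp: divide_less_eq)

lemma sq_nonneg: "0 \<le> x \<Longrightarrow> x \<le> real q \<Longrightarrow> 0 \<le> sq q x"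
  unfolding sq_def using sinq_pos q3
  by (intro divide_nonneg_pos sin_ge_zero) (auto simp: divide_le_eq)

lemma sq_q: "sq q (real q) = 0"
  unfolding sq_def using q3 by simp

lemma sq_1: "sq q 1 = 1"
  unfolding sq_def using sinq_pos by simp

lemma sq_sym: "sq q (real q - x) = sq q x"
proof -
  have "(real q - x) * pi / real q = pi - x * pi / real q" using q3 by (simp add: field_simps)
  thus ?thesis unfolding sq_def by simp
qed

lemma sq_ge1: "1 \<le> x \<Longrightarrow> x \<le> real q - 1 \<Longrightarrow> 1 \<le> sq q x"
proof -
  assume x: "1 \<le> x" "x \<le> real q - 1"
  have qp: "0 < real q" using q3 by auto
  have "sin (pi / real q) \<le> sin (x * pi / real q)"
  proof (rule sin_ge)
    show "0 < pi / real q" using qp by auto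
    show "pi / real q \<le> pi / 2" using q3 by (intro divide_left_mono) auto
    show "pi / real q \<le> x * pi / real q" using x qp by (simp add: divide_right_mono)
    have "x * pi \<le> (real q - 1) * pi" using x by (simp add: mult_right_mono)
    hence "x * pi / real q \<le> (real q - 1) * pi / real q" using qp by (simp add: divide_right_mono)
    also have "\<dots> = pi - pi / real q" using qp by (simp add: field_simps)
    finally show "x * pi / real q \<le> pi - pi / real q" .
  qed
  thus ?thesis unfolding sq_def using sinq_pos by simp
qed

lemma sq_ge2: "2 \<le> x \<Longrightarrow> x \<le> real q - 2 \<Longrightarrow> sq q 2 \<le> sq q x"
proof -
  assume x: "2 \<le> x" "x \<le> real q - 2"
  have qp: "0 < real q" using q3 by auto
  have q4: "4 \<le> real q" using x by auto
  have "sin (2 * pi / real q) \<le> sin (x * pi / real q)"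
  proof (rule sin_ge)
    show "0 < 2 * pi / real q" using qp by auto
    show "2 * pi / real q \<le> pi / 2" using q4 qp by (simp add: field_simps)
    show "2 * pi / real q \<le> x * pi / real q" using x qp by (simp add: divide_right_mono)
    have "x * pi \<le> (real q - 2) * pi" using x by (simp add: mult_right_mono)
    hence "x * pi / real q \<le> (real q - 2) * pi / real q" using qp by (simp add: divide_right_mono)
    also have "\<dots> = pi - 2 * pi / real q" using qp by (simp add: field_simps)
    finally show "x * pi / real q \<le> pi - 2 * pi / real q" .
  qed
  thus ?thesis unfolding sq_def using sinq_pos by (simp add: divide_right_mono)
qed

lemma sq2_gt1: "5 \<le> q \<Longrightarrow> 1 < sq q 2"
proof -
  assume q5: "5 \<le> q"
  have qp: "0 < real q" using q3 by auto
  have "sin (2 * pi / real q) = 2 * sin (pi / real q) * cos (pi / real q)"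
    using sin_double[of "pi / real q"] by simp
  hence c2: "sq q 2 = 2 * cos (pi / real q)"
    unfolding sq_def using sinq_pos by simp
  have "pi / real q < pi / 3" using q5 by (intro divide_strict_left_mono) auto
  moreover have "0 \<le> pi / real q" by simp
  ultimately have "cos (pi / 3) < cos (pi / real q)"
    by (intro cos_monotone_0_pi) auto
  thus ?thesis using c2 by (simp add: cos_60)
qed

end



lemma alg:
  fixes a b c :: real
  assumes id: "b^2 - a*c = 1" and b: "0 < b" and c: "0 < c" and a: "0 \<le> a"
  shows "a/b < (b+a)/(c+b)" "(b+a)/(c+b) < b/c" "b - c*(a/b) = 1/b"
    "b - c*((b+a)/(c+b)) = 1/(c+b)" "b*((b+a)/(c+b)) - a = 1/(c+b)" "b*(b/c) - a = 1/c"
    "b*(a/b) - a = 0" "b - c*(b/c) = 0" "(b*y - a)*(b - c*z) - (b*z - a)*(b - c*y) = y - z"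
proof -
  have id': "b*b = a*c + 1" using id by (simp add: power2_eq_square)
  show "a/b < (b+a)/(c+b)" using b c a id' by (simp add: field_simps; simp add: algebra_simps)
  show "(b+a)/(c+b) < b/c" using b c a id' by (simp add: field_simps; simp add: algebra_simps)
  show "b - c*(a/b) = 1/b" using b c a id' by (simp add: field_simps)
  show "b - c*((b+a)/(c+b)) = 1/(c+b)" using b c a id' by (simp add: field_simps; simp add: algebra_simps)
  show "b*((b+a)/(c+b)) - a = 1/(c+b)" using b c a id' by (simp add: field_simps; simp add: algebra_simps)
  show "b*(b/c) - a = 1/c" using b c a id' by (simp add: field_simps)
  show "b*(a/b) - a = 0" using b by simp
  show "b - c*(b/c) = 0" using c by simp
  have "(b*y - a)*(b - c*z) - (b*z - a)*(b - c*y) = (b*b - a*c)*(y-z)" by (simp add: algebra_simps)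
  thus "(b*y - a)*(b - c*z) - (b*z - a)*(b - c*y) = y - z" using id' by simp
qed

definition R :: "nat \<Rightarrow> nat \<Rightarrow> real" where "R q j = sq q (real j) / sq q (real j - 1)"
definition mm :: "nat \<Rightarrow> real \<Rightarrow> real" where
  "mm q x = (sq q x + sq q (x+1)) / (sq q (x-1) + sq q x)"
definition Nf :: "nat \<Rightarrow> real \<Rightarrow> real \<Rightarrow> real" where "Nf q x y = sq q x * y - sq q (x+1)"
definition Df :: "nat \<Rightarrow> real \<Rightarrow> real \<Rightarrow> real" where "Df q x y = sq q x - sq q (x-1) * y"
definition bal :: "nat \<Rightarrow> nat \<times> bool \<Rightarrow> real" where
  "bal q b = (if snd b then R q (Suc (fst b)) else mm q (real (fst b)))"
definition bbe :: "nat \<Rightarrow> nat \<times> bool \<Rightarrow> real" where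
  "bbe q b = (if snd b then mm q (real (fst b)) else R q (fst b))"
definition bden :: "nat \<Rightarrow> nat \<times> bool \<Rightarrow> real \<Rightarrow> real" where
  "bden q b y = (if snd b then Df q (real (fst b)) y else Nf q (real (fst b)) y)"
definition bsg :: "nat \<times> bool \<Rightarrow> real" where "bsg b = (if snd b then 1 else -1)"
definition bM :: "nat \<Rightarrow> nat \<times> bool \<Rightarrow> mat2" where
  "bM q b = (if snd b then gk q (fst b) else mmul Qm (gk q (fst b)))"
definition Br :: "nat \<Rightarrow> (nat \<times> bool) set" where "Br q = Kset q \<times> UNIV"

lemma R_Suc: "R q (Suc k) = sq q (real k + 1) / sq q (real k)"
  unfolding R_def by (simp add: add.commute)

lemma mact_gk: "mact (gk q k) y = Nf q (real k) y / Df q (real k) y"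
  unfolding mact_def gk_def Nf_def Df_def by (simp add: algebra_simps)

lemma mact_Qgk: "mact (mmul Qm (gk q k)) y = Df q (real k) y / Nf q (real k) y"
  unfolding mact_def gk_def Nf_def Df_def mmul_def Qm_def by (simp add: algebra_simps)

lemma minv1: "mact (minv (gk q k)) 0 = R q (Suc k)"
  unfolding mact_def gk_def minv_def R_Suc by simp
lemma minv2: "mact (minv (gk q k)) 1 = mm q (real k)"
  unfolding mact_def gk_def minv_def mm_def
  by (simp add: add.commute)
lemma minv3: "mact (minv (mmul Qm (gk q k))) 1 = mm q (real k)"
proof -
  have "mact (minv (mmul Qm (gk q k))) 1 = (- sq q (real k) - sq q (real k + 1)) / (- sq q (real k - 1) - sq q (real k))"
    unfolding mact_def gk_def minv_def mmul_def Qm_def by simp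
  also have "\<dots> = (sq q (real k) + sq q (real k + 1)) / (sq q (real k - 1) + sq q (real k))"
    by (metis minus_add_distrib diff_conv_add_uminus minus_divide_divide)
  also have "\<dots> = mm q (real k)" unfolding mm_def
    by (rule arg_cong2[where f="(/)"]; simp)
  finally show ?thesis .
qed
lemma minv4: "mact (minv (mmul Qm (gk q k))) 0 = R q k"
  unfolding mact_def gk_def minv_def mmul_def Qm_def R_def by simp

lemma farey_eq: "farey q x = (SOME y. \<exists>b\<in>Br q. bal q b \<le> x \<and> x \<le> bbe q b \<and> y = mact (bM q b) x)"
proof -
  have "\<And>y. (\<exists>k\<in>Kset q.
      (x \<in> {mact (minv (gk q k)) 0 .. mact (minv (gk q k)) 1} \<and> y = mact (gk q k) x) \<or>
      (x \<in> {mact (minv (mmul Qm (gk q k))) 1 .. mact (minv (mmul Qm (gk q k))) 0}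
         \<and> y = mact (mmul Qm (gk q k)) x)) = (\<exists>b\<in>Br q. bal q b \<le> x \<and> x \<le> bbe q b \<and> y = mact (bM q b) x)"
  proof
    fix y
    assume "\<exists>k\<in>Kset q.
      (x \<in> {mact (minv (gk q k)) 0 .. mact (minv (gk q k)) 1} \<and> y = mact (gk q k) x) \<or>
      (x \<in> {mact (minv (mmul Qm (gk q k))) 1 .. mact (minv (mmul Qm (gk q k))) 0}
         \<and> y = mact (mmul Qm (gk q k)) x)"
    then obtain k where k: "k \<in> Kset q" and
      h: "(x \<in> {R q (Suc k) .. mm q (real k)} \<and> y = mact (gk q k) x) \<or>
      (x \<in> {mm q (real k) .. R q k} \<and> y = mact (mmul Qm (gk q k)) x)"
      unfolding minv1 minv2 minv3 minv4 by blast
    from h show "\<exists>b\<in>Br q. bal q b \<le> x \<and> x \<le> bbe q b \<and> y = mact (bM q b) x"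
    proof
      assume "x \<in> {R q (Suc k) .. mm q (real k)} \<and> y = mact (gk q k) x"
      thus ?thesis using k by (intro bexI[of _ "(k,True)"]) (auto simp: Br_def bal_def bbe_def bM_def)
    next
      assume "x \<in> {mm q (real k) .. R q k} \<and> y = mact (mmul Qm (gk q k)) x"
      thus ?thesis using k by (intro bexI[of _ "(k,False)"]) (auto simp: Br_def bal_def bbe_def bM_def)
    qed
  next
    fix y
    assume "\<exists>b\<in>Br q. bal q b \<le> x \<and> x \<le> bbe q b \<and> y = mact (bM q b) x"
    then obtain k s where k: "k \<in> Kset q" and h: "bal q (k,s) \<le> x \<and> x \<le> bbe q (k,s) \<and> y = mact (bM q (k,s)) x"
      unfolding Br_def by auto
    show "\<exists>k\<in>Kset q.
      (x \<in> {mact (minv (gk q k)) 0 .. mact (minv (gk q k)) 1} \<and> y = mact (gk q k) x) \<or>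
      (x \<in> {mact (minv (mmul Qm (gk q k))) 1 .. mact (minv (mmul Qm (gk q k))) 0}
         \<and> y = mact (mmul Qm (gk q k)) x)"
      unfolding minv1 minv2 minv3 minv4 using k h
      by (intro bexI[of _ k]) (cases s; auto simp: bal_def bbe_def bM_def)
  qed
  thus ?thesis unfolding farey_def by presburger
qed




context fixes q :: nat assumes q3: "3 \<le> q" and oq: "odd q"
begin

lemma kx: "k \<in> Kset q \<Longrightarrow> 2 \<le> k \<and> k \<le> q - 1"
  using q3 unfolding Kset_def by auto

lemma kdat:
  assumes "2 \<le> k" "k \<le> q - 1"
  shows "sq q (real k)^2 - sq q (real k + 1) * sq q (real k - 1) = 1"
    "1 \<le> sq q (real k)" "1 \<le> sq q (real k - 1)" "0 \<le> sq q (real k + 1)"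
proof -
  have r: "2 \<le> real k" "real k \<le> real q - 1" using assms q3 by auto
  show "sq q (real k)^2 - sq q (real k + 1) * sq q (real k - 1) = 1" using sq_ident[OF q3] by simp
  show "1 \<le> sq q (real k)" using sq_ge1[OF q3] r by auto
  show "1 \<le> sq q (real k - 1)" using sq_ge1[OF q3] r by auto
  show "0 \<le> sq q (real k + 1)" using sq_nonneg[OF q3] r by auto
qed

lemma R_step: "2 \<le> j \<Longrightarrow> Suc j \<le> q \<Longrightarrow> R q (Suc j) \<le> R q j"
proof -
  assume j: "2 \<le> j" "Suc j \<le> q"
  note d = kdat[OF j(1)] 
  have d: "sq q (real j)^2 - sq q (real j + 1) * sq q (real j - 1) = 1"
    "1 \<le> sq q (real j)" "1 \<le> sq q (real j - 1)" "0 \<le> sq q (real j + 1)" using kdat[OF j(1)] j by auto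
  have "sq q (real j + 1) / sq q (real j) < sq q (real j) / sq q (real j - 1)"
    using alg(1,2)[OF d(1)] d by (meson less_le_trans order.strict_trans zero_less_one)
  thus ?thesis unfolding R_Suc unfolding R_def by linarith
qed

lemma R_mono: "2 \<le> i \<Longrightarrow> i \<le> j \<Longrightarrow> j \<le> q \<Longrightarrow> R q j \<le> R q i"
proof -
  assume a: "2 \<le> i" "i \<le> j" "j \<le> q"
  have "j \<le> q \<longrightarrow> R q j \<le> R q i"
    using a(2)
  proof (induction j rule: dec_induct)
    case base thus ?case by simp
  next
    case (step n)
    show ?case using R_step[of n] step a by auto
  qed
  thus ?thesis using a by auto
qed

lemma R_q: "R q q = 0" unfolding R_def using sq_q[OF q3] by simp

lemma R_k0: "R q ((q+1) div 2) = 1"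
proof -
  have e: "2 * ((q+1) div 2) = q + 1" using oq by auto
  hence "real (2 * ((q+1) div 2)) = real (q + 1)" by (simp only:)
  hence "2 * real ((q+1) div 2) = real q + 1" by simp
  hence h: "real ((q+1) div 2) - 1 = real q - real ((q+1) div 2)" by linarith
  have "sq q (real ((q+1) div 2) - 1) = sq q (real q - real ((q+1) div 2))" by (simp only: h)
  also have "\<dots> = sq q (real ((q+1) div 2))" by (rule sq_sym[OF q3])
  finally have "sq q (real ((q+1) div 2) - 1) = sq q (real ((q+1) div 2))" .
  moreover have "0 < sq q (real ((q+1) div 2))" using e q3 by (intro sq_pos[OF q3]) auto
  ultimately show ?thesis unfolding R_def by simp
qed


lemma k0K: "(q+1) div 2 \<in> Kset q" "q - 1 \<in> Kset q"
  using q3 unfolding Kset_def by auto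

lemma kfull:
  assumes k: "k \<in> Kset q"
  shows "sq q (real k)^2 - sq q (real k + 1) * sq q (real k - 1) = 1"
    "0 < sq q (real k)" "0 < sq q (real k - 1)" "0 \<le> sq q (real k + 1)"
    "1 \<le> sq q (real k)" "1 \<le> sq q (real k - 1)"
  using kdat[of k] kx[OF k] by auto

lemma bdat:
  assumes k: "k \<in> Kset q"
  shows "R q (Suc k) < mm q (real k)" "mm q (real k) < R q k" "R q k \<le> 1" "0 \<le> R q (Suc k)"
proof -
  note d = kfull[OF k]
  show "R q (Suc k) < mm q (real k)" unfolding R_Suc mm_def using alg(1)[OF d(1)] d by simp
  show "mm q (real k) < R q k" unfolding R_def mm_def using alg(2)[OF d(1)] d by simp
  have "R q k \<le> R q ((q+1) div 2)" using k q3 unfolding Kset_def by (intro R_mono) auto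
  thus "R q k \<le> 1" using R_k0 by simp
  show "0 \<le> R q (Suc k)" unfolding R_Suc using d by simp
qed

lemma br: "b \<in> Br q \<Longrightarrow> 0 \<le> bal q b \<and> bal q b < bbe q b \<and> bbe q b \<le> 1"
proof -
  assume "b \<in> Br q"
  hence k: "fst b \<in> Kset q" unfolding Br_def by auto
  note d = bdat[OF k]
  show ?thesis unfolding bal_def bbe_def using d by auto
qed

lemma den_bounds:
  assumes b: "b \<in> Br q" and y: "bal q b \<le> y" "y \<le> bbe q b"
  shows "1 / (sq q (real (fst b) - 1) + sq q (real (fst b))) \<le> bden q b y"
    "bden q b y \<le> (if snd b then 1 / sq q (real (fst b)) else 1 / sq q (real (fst b) - 1))"
proof -
  obtain k s where bk: "b = (k,s)" by force
  have k: "k \<in> Kset q" using b bk unfolding Br_def by auto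
  note d = kfull[OF k]
  define A where "A = sq q (real k + 1)"
  define B where "B = sq q (real k)"
  define C where "C = sq q (real k - 1)"
  have id: "B^2 - A*C = 1" "0 < B" "0 < C" "0 \<le> A" using d unfolding A_def B_def C_def by auto
  note al = alg[OF id]
  have mmE: "mm q (real k) = (B + A)/(C + B)" unfolding mm_def A_def B_def C_def by (simp add: add.commute)
  have R1: "R q (Suc k) = A / B" unfolding R_Suc A_def B_def by simp
  have R2: "R q k = B / C" unfolding R_def B_def C_def by simp
  have "1 / (C + B) \<le> bden q b y \<and> bden q b y \<le> (if s then 1 / B else 1 / C)"
  proof (cases s)
    case True
    hence y': "A/B \<le> y" "y \<le> (B+A)/(C+B)" using y bk mmE R1 unfolding bal_def bbe_def by auto
    have D: "bden q b y = B - C * y" using True bk unfolding bden_def Df_def B_def C_def by simp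
    have "C * y \<le> C * ((B+A)/(C+B))" by (rule mult_left_mono) (use y' id in auto)
    moreover have "C * (A/B) \<le> C * y" by (rule mult_left_mono) (use y' id in auto)
    ultimately have "1 / (C + B) \<le> B - C * y" "B - C * y \<le> 1 / B" using al(3,4) by linarith+
    thus ?thesis using D True by simp
  next
    case False
    hence y': "(B+A)/(C+B) \<le> y" "y \<le> B/C" using y bk mmE R2 unfolding bal_def bbe_def by auto
    have D: "bden q b y = B * y - A" using False bk unfolding bden_def Nf_def B_def A_def by simp
    have "B * ((B+A)/(C+B)) \<le> B * y" by (rule mult_left_mono) (use y' id in auto)
    moreover have "B * y \<le> B * (B/C)" by (rule mult_left_mono) (use y' id in auto)
    ultimately have "1 / (C + B) \<le> B * y - A" "B * y - A \<le> 1 / C" using al(5,6) by linarith+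
    thus ?thesis using D False by simp
  qed
  thus "1 / (sq q (real (fst b) - 1) + sq q (real (fst b))) \<le> bden q b y"
    "bden q b y \<le> (if snd b then 1 / sq q (real (fst b)) else 1 / sq q (real (fst b) - 1))"
    unfolding bk B_def C_def by auto
qed

lemma dpos: "b \<in> Br q \<Longrightarrow> bal q b \<le> y \<Longrightarrow> y \<le> bbe q b \<Longrightarrow> 0 < bden q b y \<and> bden q b y \<le> 1"
proof -
  assume a: "b \<in> Br q" "bal q b \<le> y" "y \<le> bbe q b"
  have k: "fst b \<in> Kset q" using a unfolding Br_def by auto
  note d = kfull[OF k]
  have "0 < 1 / (sq q (real (fst b) - 1) + sq q (real (fst b)))" using d by simp
  moreover have "(if snd b then 1 / sq q (real (fst b)) else 1 / sq q (real (fst b) - 1)) \<le> 1"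
    using d by auto
  ultimately show ?thesis using den_bounds[OF a] by linarith
qed

lemma mact_bM: "mact (bM q b) y = (if snd b then Nf q (real (fst b)) y / Df q (real (fst b)) y
    else Df q (real (fst b)) y / Nf q (real (fst b)) y)"
  unfolding bM_def by (simp add: mact_gk mact_Qgk)

lemma mact_bM_den: "mact (bM q b) y = (if snd b then Nf q (real (fst b)) y else Df q (real (fst b)) y) / bden q b y"
  unfolding mact_bM bden_def by simp

lemma vals:
  assumes k: "k \<in> Kset q"
  shows "Nf q (real k) (R q (Suc k)) = 0" "Df q (real k) (R q k) = 0"
    "Nf q (real k) (mm q (real k)) = Df q (real k) (mm q (real k))"
    "Nf q (real k) (mm q (real k)) \<noteq> 0"
proof -
  note d = kfull[OF k]
  define A where "A = sq q (real k + 1)"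
  define B where "B = sq q (real k)"
  define C where "C = sq q (real k - 1)"
  have id: "B^2 - A*C = 1" "0 < B" "0 < C" "0 \<le> A" using d unfolding A_def B_def C_def by auto
  note al = alg[OF id]
  have mmE: "mm q (real k) = (B + A)/(C + B)" unfolding mm_def A_def B_def C_def by (simp add: add.commute)
  have R1: "R q (Suc k) = A / B" unfolding R_Suc A_def B_def by simp
  have R2: "R q k = B / C" unfolding R_def B_def C_def by simp
  have N: "Nf q (real k) y = B * y - A" for y unfolding Nf_def A_def B_def by simp
  have D: "Df q (real k) y = B - C * y" for y unfolding Df_def C_def B_def by simp
  show "Nf q (real k) (R q (Suc k)) = 0" unfolding N R1 using al(7) .
  show "Df q (real k) (R q k) = 0" unfolding D R2 using al(8) .
  show "Nf q (real k) (mm q (real k)) = Df q (real k) (mm q (real k))" unfolding N D mmE using al(4,5) by simp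
  show "Nf q (real k) (mm q (real k)) \<noteq> 0" unfolding N mmE using al(5) id by simp
qed

lemma endvals:
  assumes b: "b \<in> Br q"
  shows "mact (bM q b) (bal q b) = (if snd b then 0 else 1)"
        "mact (bM q b) (bbe q b) = (if snd b then 1 else 0)"
proof -
  have k: "fst b \<in> Kset q" using b unfolding Br_def by auto
  note v = vals[OF k]
  show "mact (bM q b) (bal q b) = (if snd b then 0 else 1)"
    unfolding mact_bM bal_def using v by auto
  show "mact (bM q b) (bbe q b) = (if snd b then 1 else 0)"
    unfolding mact_bM bbe_def using v by auto
qed

lemma bal_ge: "b \<in> Br q \<Longrightarrow> R q (Suc (fst b)) \<le> bal q b"
  using bdat unfolding Br_def bal_def by (auto simp: less_imp_le)
lemma bbe_le: "b \<in> Br q \<Longrightarrow> bbe q b \<le> R q (fst b)"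
  using bdat unfolding Br_def bbe_def by (auto simp: less_imp_le)

lemma uniq1:
  assumes b: "b \<in> Br q" and b': "b' \<in> Br q" and lt: "fst b < fst b'"
    and x: "bal q b \<le> x" "x \<le> bbe q b" "bal q b' \<le> x" "x \<le> bbe q b'"
  shows "mact (bM q b) x = mact (bM q b')  x"
proof -
  have k: "fst b \<in> Kset q" and k': "fst b' \<in> Kset q" using b b' unfolding Br_def by auto
  have "R q (fst b') \<le> R q (Suc (fst b))" using kx[OF k] kx[OF k'] lt q3 by (intro R_mono) auto
  hence e: "x = R q (Suc (fst b))" "bal q b = R q (Suc (fst b))" "x = R q (fst b')" "bbe q b' = R q (fst b')"
    using bal_ge[OF b] bbe_le[OF b'] x by linarith+
  have sb: "snd b" using e(2) bdat(1)[OF k] unfolding bal_def by (auto split: if_splits)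
  have sb': "\<not> snd b'" using e(4) bdat(2)[OF k'] unfolding bbe_def by (auto split: if_splits)
  have "mact (bM q b) x = 0" using endvals(1)[OF b] e sb by simp
  moreover have "mact (bM q b') x = 0" using endvals(2)[OF b'] e sb' by simp
  ultimately show ?thesis by simp
qed

lemma uniq:
  assumes b: "b \<in> Br q" and b': "b' \<in> Br q"
    and x: "bal q b \<le> x" "x \<le> bbe q b" "bal q b' \<le> x" "x \<le> bbe q b'"
  shows "mact (bM q b) x = mact (bM q b')  x"
proof -
  consider "fst b < fst b'" | "fst b' < fst b" | "fst b = fst b'" by linarith
  then show ?thesis
  proof cases
    case 1 thus ?thesis using uniq1[OF b b'] x by auto
  next
    case 2 thus ?thesis using uniq1[OF b' b] x by auto
  next
    case 3
    show ?thesis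
    proof (cases "snd b = snd b'")
      case True hence "b = b'" using 3 by (simp add: prod_eq_iff)
      thus ?thesis by simp
    next
      case False
      have k: "fst b \<in> Kset q" using b unfolding Br_def by auto
      have "x = mm q (real (fst b))" using x 3 False unfolding bal_def bbe_def
        by (auto split: if_splits)
      thus ?thesis using vals[OF k] 3 unfolding mact_bM by auto
    qed
  qed
qed

lemma farey_val:
  assumes b: "b \<in> Br q" and x: "bal q b \<le> x" "x \<le> bbe q b"
  shows "farey q x = mact (bM q b) x"
  unfolding farey_eq
proof (rule some_equality)
  show "\<exists>b'\<in>Br q. bal q b' \<le> x \<and> x \<le> bbe q b' \<and> mact (bM q b) x = mact (bM q b') x"
    using b x by auto
next
  fix y assume "\<exists>b'\<in>Br q. bal q b' \<le> x \<and> x \<le> bbe q b' \<and> y = mact (bM q b') x"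
  then obtain b' where b': "b' \<in> Br q" "bal q b' \<le> x" "x \<le> bbe q b'" "y = mact (bM q b') x" by auto
  have "mact (bM q b) x = mact (bM q b') x" by (rule uniq[OF b b'(1) x b'(2) b'(3)])
  thus "y = mact (bM q b) x" using b'(4) by simp
qed

end



context fixes q :: nat assumes q3: "3 \<le> q" and oq: "odd q"
begin

lemma diffN:
  assumes k: "k \<in> Kset q"
  shows "Nf q (real k) y * Df q (real k) z - Nf q (real k) z * Df q (real k) y = y - z"
proof -
  note d = kfull[OF q3 oq k]
  have id: "sq q (real k)^2 - sq q (real k + 1) * sq q (real k - 1) = 1" "0 < sq q (real k)"
    "0 < sq q (real k - 1)" "0 \<le> sq q (real k + 1)" using d by auto
  show ?thesis unfolding Nf_def Df_def using alg(9)[OF id] by simp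
qed

lemma cover: "0 \<le> x \<Longrightarrow> x \<le> 1 \<Longrightarrow> \<exists>b\<in>Br q. bal q b \<le> x \<and> x \<le> bbe q b"
proof (rule ccontr)
  assume x: "0 \<le> x" "x \<le> 1" and H: "\<not> (\<exists>b\<in>Br q. bal q b \<le> x \<and> x \<le> bbe q b)"
  define k0 where "k0 = (q+1) div 2"
  have k0q: "k0 \<le> q" "2 \<le> k0" using q3 unfolding k0_def by auto
  have "j \<le> q \<longrightarrow> x \<le> R q j" if "k0 \<le> j" for j
    using that
  proof (induction j rule: dec_induct)
    case base thus ?case using R_k0[OF q3 oq] x unfolding k0_def by simp
  next
    case (step j)
    show ?case
    proof
      assume sj: "Suc j \<le> q"
      have jK: "j \<in> Kset q" using step(1) sj unfolding Kset_def k0_def by auto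
      have xj: "x \<le> R q j" using step sj by auto
      show "x \<le> R q (Suc j)"
      proof (rule ccontr)
        assume "\<not> x \<le> R q (Suc j)"
        hence xs: "R q (Suc j) \<le> x" by simp
        show False
        proof (cases "x \<le> mm q (real j)")
          case True
          have "(j,True) \<in> Br q" using jK by (simp add: Br_def)
          moreover have "bal q (j,True) \<le> x \<and> x \<le> bbe q (j,True)" using xs True by (simp add: bal_def bbe_def)
          ultimately show False using H by blast
        next
          case False
          have "(j,False) \<in> Br q" using jK by (simp add: Br_def)
          moreover have "bal q (j,False) \<le> x \<and> x \<le> bbe q (j,False)" using xj False by (simp add: bal_def bbe_def)
          ultimately show False using H by blast
        qed
      qed
    qed
  qed
  from this[of q] k0q have "x \<le> R q q" by auto
  hence x0: "x = 0" using R_q[OF q3 oq] x by simp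
  have qK: "q - 1 \<in> Kset q" using k0K[OF q3 oq] by simp
  have "R q (Suc (q - 1)) = 0" using R_q[OF q3 oq] q3 by (simp add: Suc_diff_1)
  moreover have "R q (Suc (q-1)) < mm q (real (q-1))" using bdat[OF q3 oq qK] by simp
  ultimately have "bal q (q-1,True) \<le> x \<and> x \<le> bbe q (q-1,True)" using x0 by (simp add: bal_def bbe_def)
  moreover have "(q-1,True) \<in> Br q" using qK by (simp add: Br_def)
  ultimately show False using H by blast
qed

lemma contF: "b \<in> Br q \<Longrightarrow> continuous_on {bal q b..bbe q b} (farey q)"
proof -
  assume b: "b \<in> Br q"
  have eq: "\<And>y. y \<in> {bal q b..bbe q b} \<Longrightarrow> farey q y = mact (bM q b) y"
    using farey_val[OF q3 oq b] by auto
  have pos: "\<And>y. y \<in> {bal q b..bbe q b} \<Longrightarrow> bden q b y \<noteq> 0"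
    using dpos[OF q3 oq b] by force
  have "continuous_on {bal q b..bbe q b} (\<lambda>y. mact (bM q b) y)"
  proof (cases "snd b")
    case True
    have p2: "\<And>y. y \<in> {bal q b..bbe q b} \<Longrightarrow> Df q (real (fst b)) y \<noteq> 0"
      using pos True by (simp add: bden_def)
    have "continuous_on {bal q b..bbe q b} (\<lambda>y. Nf q (real (fst b)) y / Df q (real (fst b)) y)"
      using p2 unfolding Nf_def Df_def by (intro continuous_intros) auto
    moreover have e: "mact (bM q b) = (\<lambda>y. Nf q (real (fst b)) y / Df q (real (fst b)) y)"
      using True by (simp add: fun_eq_iff mact_bM[OF q3 oq])
    ultimately show ?thesis by simp
  next
    case False
    have p2: "\<And>y. y \<in> {bal q b..bbe q b} \<Longrightarrow> Nf q (real (fst b)) y \<noteq> 0"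
      using pos False by (simp add: bden_def)
    have "continuous_on {bal q b..bbe q b} (\<lambda>y. Df q (real (fst b)) y / Nf q (real (fst b)) y)"
      using p2 unfolding Nf_def Df_def by (intro continuous_intros) auto
    moreover have e: "mact (bM q b) = (\<lambda>y. Df q (real (fst b)) y / Nf q (real (fst b)) y)"
      using False by (simp add: fun_eq_iff mact_bM[OF q3 oq])
    ultimately show ?thesis by simp
  qed
  thus ?thesis by (rule continuous_on_eq) (simp add: eq)
qed

lemma diffF:
  assumes b: "b \<in> Br q" and y: "bal q b \<le> y" "y \<le> bbe q b" and z: "bal q b \<le> z" "z \<le> bbe q b"
  shows "farey q y - farey q z = bsg b * (y - z) / (bden q b y * bden q b z)"
proof -
  have k: "fst b \<in> Kset q" using b unfolding Br_def by auto
  have dy: "bden q b y \<noteq> 0" and dz: "bden q b z \<noteq> 0" using dpos[OF q3 oq b] y z by force+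
  note dn = diffN[OF k]
  have fy: "farey q y = mact (bM q b) y" and fz: "farey q z = mact (bM q b) z"
    using farey_val[OF q3 oq b] y z by auto
  show ?thesis
  proof (cases "snd b")
    case True
    have "farey q y - farey q z = Nf q (real (fst b)) y / Df q (real (fst b)) y - Nf q (real (fst b)) z / Df q (real (fst b)) z"
      unfolding fy fz mact_bM[OF q3 oq] using True by simp
    also have "\<dots> = (Nf q (real (fst b)) y * Df q (real (fst b)) z - Nf q (real (fst b)) z * Df q (real (fst b)) y)
        / (Df q (real (fst b)) y * Df q (real (fst b)) z)"
      using dy dz True unfolding bden_def by (simp add: field_simps)
    finally show ?thesis using dn True unfolding bsg_def bden_def by simp
  next
    case False
    have "farey q y - farey q z = Df q (real (fst b)) y / Nf q (real (fst b)) y - Df q (real (fst b)) z / Nf q (real (fst b)) z"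
      unfolding fy fz mact_bM[OF q3 oq] using False by simp
    also have "\<dots> = - (Nf q (real (fst b)) y * Df q (real (fst b)) z - Nf q (real (fst b)) z * Df q (real (fst b)) y)
        / (Nf q (real (fst b)) y * Nf q (real (fst b)) z)"
      using dy dz False unfolding bden_def by (simp add: field_simps)
    finally show ?thesis using dn False unfolding bsg_def bden_def by simp
  qed
qed

lemma endsF: "b \<in> Br q \<Longrightarrow> (farey q (bal q b) = 0 \<and> farey q (bbe q b) = 1) \<or> (farey q (bal q b) = 1 \<and> farey q (bbe q b) = 0)"
proof -
  assume b: "b \<in> Br q"
  have l: "bal q b \<le> bbe q b" using br[OF q3 oq b] by auto
  have "farey q (bal q b) = mact (bM q b) (bal q b)" "farey q (bbe q b) = mact (bM q b) (bbe q b)"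
    using farey_val[OF q3 oq b] l by auto
  thus ?thesis using endvals[OF q3 oq b] by auto
qed

lemma sq2ge1: "1 \<le> sq q 2" using sq_ge1[OF q3, of 2] q3 by auto

lemma sqqm1: "sq q (real q - 1) = 1" using sq_sym[OF q3, of 1] sq_1[OF q3] by simp
lemma sqqm2: "sq q (real q - 2) = sq q 2" using sq_sym[OF q3, of 2] by simp

lemma thetaF:
  assumes dl: "0 < \<delta>" "\<delta> < 1/2"
  shows "\<exists>\<theta>. 0 < \<theta> \<and> \<theta> < 1 \<and>
     (\<forall>b\<in>Br q. \<forall>x. bal q b \<le> x \<and> x \<le> bbe q b \<and> \<delta> \<le> x \<and> x \<le> 1 - \<delta> \<longrightarrow> bden q b x \<le> \<theta>)"
proof -
  define \<mu> where "\<mu> = (if 5 \<le> q then 1 / sq q 2 else 0)"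
  have mu1: "\<mu> < 1" unfolding \<mu>_def using sq2_gt1[OF q3] by auto
  define \<theta> where "\<theta> = max \<mu> (1 - \<delta>)"
  have th: "0 < \<theta>" "\<theta> < 1" using dl mu1 unfolding \<theta>_def by auto
  have "bden q b x \<le> \<theta>" if b: "b \<in> Br q" and x: "bal q b \<le> x" "x \<le> bbe q b" "\<delta> \<le> x" "x \<le> 1 - \<delta>" for b x
  proof -
    obtain k s where bk: "b = (k,s)" by force
    have k: "k \<in> Kset q" using b bk unfolding Br_def by auto
    have kr: "(q+1) div 2 \<le> k" "k \<le> q - 1" using k unfolding Kset_def by auto
    note db = den_bounds[OF q3 oq b x(1,2)]
    have s2: "0 < sq q 2" using sq2ge1 by simp
    show ?thesis
    proof (cases s)
      case True
      show ?thesis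
      proof (cases "k \<le> q - 2")
        case kle: True
        have q5: "5 \<le> q" using kr kle oq q3 by presburger
        have "sq q 2 \<le> sq q (real k)" using kle kr q3 by (intro sq_ge2[OF q3]) auto
        hence "1 / sq q (real k) \<le> 1 / sq q 2" using s2 by (intro divide_left_mono) auto
        thus ?thesis using db(2) bk True q5 unfolding \<theta>_def \<mu>_def by auto
      next
        case False
        hence kq: "k = q - 1" using kr by auto
        have e0: "real k = real q - 1" "real k - 1 = real q - 2" using kq q3 by auto
        have e1a: "sq q (real k) = 1" unfolding e0(1) by (rule sqqm1)
        have e1b: "sq q (real k - 1) = sq q 2" unfolding e0(2) by (rule sqqm2)
        note e1 = e1a e1b
        have "bden q b x = 1 - sq q 2 * x" using bk True unfolding bden_def Df_def by (simp add: e1)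
        moreover have "x \<le> sq q 2 * x" using sq2ge1 x dl by (simp add: mult_le_cancel_right1)
        ultimately show ?thesis using x unfolding \<theta>_def by auto
      qed
    next
      case False
      show ?thesis
      proof (cases "3 \<le> k")
        case kge: True
        have q5: "5 \<le> q" using kr kge oq q3 by presburger
        have "sq q 2 \<le> sq q (real k - 1)" using kge kr q3 by (intro sq_ge2[OF q3]) auto
        hence "1 / sq q (real k - 1) \<le> 1 / sq q 2" using s2 by (intro divide_left_mono) auto
        thus ?thesis using db(2) bk False q5 unfolding \<theta>_def \<mu>_def by auto
      next
        case kl: False
        hence kq: "k = 2" "q = 3" using kr q3 oq by presburger+
        have e0: "real k = real q - 1" "real k + 1 = real q" using kq by auto
        have e1a: "sq q (real k) = 1" unfolding e0(1) by (rule sqqm1)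
        have e1b: "sq q (real k + 1) = 0" unfolding e0(2) by (rule sq_q[OF q3])
        note e1 = e1a e1b
        have "bden q b x = x" using bk False unfolding bden_def Nf_def by (simp add: e1)
        thus ?thesis using x unfolding \<theta>_def by auto
      qed
    qed
  qed
  thus ?thesis using th by blast
qed

lemma zeroF: "\<exists>b0\<in>Br q. bal q b0 = 0 \<and> farey q 0 = 0 \<and> (\<forall>x. 0 \<le> x \<and> x \<le> bbe q b0 \<longrightarrow> x + x^2 \<le> farey q x)"
proof -
  define b0 where "b0 = (q - 1, True)"
  have b0: "b0 \<in> Br q" unfolding b0_def Br_def using k0K[OF q3 oq] by auto
  have a0: "bal q b0 = 0" unfolding b0_def bal_def using R_q[OF q3 oq] q3 by (simp add: Suc_diff_1)
  have f0: "farey q 0 = 0" using farey_val[OF q3 oq b0, of 0] endvals(1)[OF q3 oq b0] a0 br[OF q3 oq b0]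
    unfolding b0_def by auto
  have e0: "real (q-1) = real q - 1" "real (q-1) - 1 = real q - 2" using q3 by auto
  have e1a: "sq q (real (q-1)) = 1" unfolding e0(1) by (rule sqqm1)
  have e1b: "sq q (real (q-1) - 1) = sq q 2" unfolding e0(2) by (rule sqqm2)
  note e1 = e1a e1b
  have "x + x^2 \<le> farey q x" if x: "0 \<le> x" "x \<le> bbe q b0" for x
  proof -
    have xb: "bal q b0 \<le> x" using a0 x by simp
    have "farey q x - farey q 0 = bsg b0 * (x - 0) / (bden q b0 x * bden q b0 0)"
      using diffF[OF b0 xb x(2)] a0 br[OF q3 oq b0] by auto
    moreover have "bden q b0 0 = 1" unfolding b0_def bden_def fst_conv snd_conv if_True Df_def e1 by simp
    moreover have dx: "bden q b0 x = 1 - sq q 2 * x" unfolding b0_def bden_def fst_conv snd_conv if_True Df_def e1 by simp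
    ultimately have fx: "farey q x = x / (1 - sq q 2 * x)" using f0 unfolding b0_def bsg_def by simp
    have pos: "0 < 1 - sq q 2 * x" using dpos[OF q3 oq b0 xb x(2)] dx by simp
    have le: "1 - sq q 2 * x \<le> 1 - x" using sq2ge1 x by (simp add: mult_le_cancel_right1)
    have "(x + x^2) * (1 - sq q 2 * x) \<le> (x + x^2) * (1 - x)" using le x by (intro mult_left_mono) auto
    also have "\<dots> \<le> x" using x by (simp add: algebra_simps power2_eq_square power3_eq_cube)
    finally have "(x + x^2) * (1 - sq q 2 * x) \<le> x" .
    thus ?thesis unfolding fx using pos by (simp add: le_divide_eq)
  qed
  thus ?thesis using b0 a0 f0 by blast
qed

lemma oneF: "\<exists>b1\<in>Br q. bbe q b1 = 1 \<and> farey q 1 = 0"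
proof -
  define b1 where "b1 = ((q+1) div 2, False)"
  have b1: "b1 \<in> Br q" unfolding b1_def Br_def using k0K[OF q3 oq] by auto
  have e: "bbe q b1 = 1" unfolding b1_def bbe_def using R_k0[OF q3 oq] by simp
  have "farey q 1 = 0" using farey_val[OF q3 oq b1, of 1] endvals(2)[OF q3 oq b1] e br[OF q3 oq b1]
    unfolding b1_def by auto
  thus ?thesis using b1 e by blast
qed

lemma fl_inst: "fl (farey q) (Br q) (bal q) (bbe q) (bden q) bsg"
proof
  show "\<And>b. b \<in> Br q \<Longrightarrow> 0 \<le> bal q b \<and> bal q b < bbe q b \<and> bbe q b \<le> 1" by (rule br[OF q3 oq])
  show "\<And>x. 0 \<le> x \<Longrightarrow> x \<le> 1 \<Longrightarrow> \<exists>b\<in>Br q. bal q b \<le> x \<and> x \<le> bbe q b" by (rule cover)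
  show "\<And>b. b \<in> Br q \<Longrightarrow> continuous_on {bal q b..bbe q b} (farey q)" by (rule contF)
  show "\<And>b x. b \<in> Br q \<Longrightarrow> bal q b \<le> x \<Longrightarrow> x \<le> bbe q b \<Longrightarrow> 0 < bden q b x \<and> bden q b x \<le> 1"
    by (rule dpos[OF q3 oq])
  show "\<And>b x y. b \<in> Br q \<Longrightarrow> bal q b \<le> x \<Longrightarrow> x \<le> bbe q b \<Longrightarrow> bal q b \<le> y \<Longrightarrow> y \<le> bbe q b \<Longrightarrow>
     farey q x - farey q y = bsg b * (x - y) / (bden q b x * bden q b y)" by (rule diffF)
  show "\<And>b. b \<in> Br q \<Longrightarrow> bsg b = 1 \<or> bsg b = -1" unfolding bsg_def by auto
  show "\<And>b. b \<in> Br q \<Longrightarrow> (farey q (bal q b) = 0 \<and> farey q (bbe q b) = 1) \<or> (farey q (bal q b) = 1 \<and> farey q (bbe q b) = 0)"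
    by (rule endsF)
  show "\<And>\<delta>. 0 < \<delta> \<Longrightarrow> \<delta> < 1/2 \<Longrightarrow> \<exists>\<theta>. 0 < \<theta> \<and> \<theta> < 1 \<and>
     (\<forall>b\<in>Br q. \<forall>x. bal q b \<le> x \<and> x \<le> bbe q b \<and> \<delta> \<le> x \<and> x \<le> 1 - \<delta> \<longrightarrow> bden q b x \<le> \<theta>)"
    by (rule thetaF)
  show "\<exists>b0\<in>Br q. bal q b0 = 0 \<and> farey q 0 = 0 \<and> (\<forall>x. 0 \<le> x \<and> x \<le> bbe q b0 \<longrightarrow> x + x^2 \<le> farey q x)"
    by (rule zeroF)
  show "\<exists>b1\<in>Br q. bbe q b1 = 1 \<and> farey q 1 = 0" by (rule oneF)
qed

end

theorem proposition2p2:
  fixes q :: nat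
  assumes "odd q" and "q \<ge> 3"
  shows "\<forall>B1 B2. openin (top_of_set {0..1::real}) B1 \<and> B1 \<noteq> {} \<and>
                 openin (top_of_set {0..1::real}) B2 \<and> B2 \<noteq> {} \<longrightarrow>
           (\<exists>N::nat. \<forall>n\<ge>N. (farey q ^^ n) ` B1 \<inter> B2 \<noteq> {})"
  using fl.mixing[OF fl_inst[OF assms(2) assms(1)]] by blast


end
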